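(* In the bilocality scenario, let the two sources each prepare the singlet, $\rho=|\Psi^-_{AB_1}\rangle\langle\Psi^-_{AB_1}|\otimes|\Psi^-_{B_2C}\rangle\langle\Psi^-_{B_2C}|$, let $A$ and $C$ measure $A_0=C_0=(\sigma_z+\sigma_x)/\sqrt2$, $A_1=C_1=(\sigma_z-\sigma_x)/\sqrt2$, and let $B$ either (case 14) perform the complete Bell-state measurement on $B_1B_2$, or (case 22) choose $y\in\{0,1\}$ and measure the two-outcome observable $\mathcal B_y=(1-y)\,\sigma_z\otimes\sigma_z+y\,\sigma_x\otimes\sigma_x$. In the strong-eavesdropper scenario (a single eavesdropper who may act jointly on both sources), there is an eavesdropping strategy reproducing exactly the observed distribution $p(abc\mid xyz)$ for all settings, namely preparing $$\tilde\rho=\tfrac14\sum_{\psi\in\{\Phi^+,\Phi^-,\Psi^+,\Psi^-\}}|\psi_{AC}\rangle\langle\psi_{AC}|\otimes|\psi_{B_1B_2}\rangle\langle\psi_{B_1B_2}|$$ with the eavesdropper knowing $\psi$, which achieves guessing probability $3/8$ both for the outcomes $(a,b,c)$ at $x=z=0$ (and $y=0$ in case 22) and for $(a,c)$ at $x=z=0$. Consequently $H_{\min}(ABC\mid E)\le\log_2(8/3)\approx1.41$ and $H_{\min}(AC\mid E)\le\log_2(8/3)\approx1.41$ in both cases.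
   Context: Bell states: $|\Phi^\pm\rangle=(|00\rangle\pm|11\rangle)/\sqrt2$, $|\Psi^\pm\rangle=(|01\rangle\pm|10\rangle)/\sqrt2$; $\sigma_x,\sigma_z$ are Pauli matrices. The min-entropy is $H_{\min}=-\log_2P_{\mathrm{guess}}$, where $P_{\mathrm{guess}}$ is the maximal probability, over eavesdropper strategies allowed by the scenario that reproduce the observed statistics of $A,B,C$, that the eavesdropper's output equals the targeted outcomes; any particular such strategy lower-bounds $P_{\mathrm{guess}}$ and hence upper-bounds $H_{\min}$. *)

theory Defs
  imports Complex_Main
begin

text \<open>Computational basis of a qubit: False = |0>, True = |1>.
  All states and observables in this statement have real entries, so real matrices
  are used throughout.\<close>

type_synonym qop = "bool \<Rightarrow> bool \<Rightarrow> real"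
type_synonym qop2 = "bool \<times> bool \<Rightarrow> bool \<times> bool \<Rightarrow> real"

text \<open>Four-qubit register ordered as (A, B1, B2, C).\<close>
type_synonym idx4 = "bool \<times> bool \<times> bool \<times> bool"
type_synonym op4 = "idx4 \<Rightarrow> idx4 \<Rightarrow> real"

definition sgn_bit :: "bool \<Rightarrow> real" where
  "sgn_bit a = (if a then -1 else 1)"

definition id1 :: qop where "id1 i j = (if i = j then 1 else 0)"
definition sigma_z :: qop where "sigma_z i j = (if i = j then sgn_bit i else 0)"
definition sigma_x :: qop where "sigma_x i j = (if i \<noteq> j then 1 else 0)"

text \<open>A_0 = C_0 = (sigma_z + sigma_x)/sqrt 2, A_1 = C_1 = (sigma_z - sigma_x)/sqrt 2;
  setting False = 0, True = 1.\<close>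
definition obsAC :: "bool \<Rightarrow> qop" where
  "obsAC x i j = (sigma_z i j + sgn_bit x * sigma_x i j) / sqrt 2"

text \<open>Projector onto outcome a (False = outcome +1, True = outcome -1) of a +-1 observable.\<close>
definition projAC :: "bool \<Rightarrow> bool \<Rightarrow> qop" where
  "projAC x a i j = (id1 i j + sgn_bit a * obsAC x i j) / 2"

text \<open>Bell vectors as two-qubit amplitude functions:
  0 = Phi+, 1 = Phi-, 2 = Psi+, 3 = Psi-.\<close>
definition bellv :: "nat \<Rightarrow> bool \<Rightarrow> bool \<Rightarrow> real" where
  "bellv k u v =
     (if k = 0 then (if u = v then 1 / sqrt 2 else 0)
      else if k = 1 then (if u = v then sgn_bit u / sqrt 2 else 0)
      else if k = 2 then (if u \<noteq> v then 1 / sqrt 2 else 0)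
      else (if u \<noteq> v then sgn_bit u / sqrt 2 else 0))"

datatype bcase = Case14 | Case22

definition Ysets :: "bcase \<Rightarrow> nat set" where
  "Ysets cs = (case cs of Case14 \<Rightarrow> {0} | Case22 \<Rightarrow> {0, 1})"

definition Bouts :: "bcase \<Rightarrow> nat set" where
  "Bouts cs = (case cs of Case14 \<Rightarrow> {0..<4} | Case22 \<Rightarrow> {0, 1})"

definition Bobs :: "nat \<Rightarrow> qop2" where
  "Bobs y = (\<lambda>(u1, u2) (v1, v2).
     (1 - real y) * sigma_z u1 v1 * sigma_z u2 v2 + real y * sigma_x u1 v1 * sigma_x u2 v2)"

text \<open>POVM element of B for setting y and outcome b. Case 14: complete Bell-state
  measurement (outcome b = projection on Bell state b). Case 22: outcome 0 = +1,
  outcome 1 = -1 of B_y.\<close>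
definition projB :: "bcase \<Rightarrow> nat \<Rightarrow> nat \<Rightarrow> qop2" where
  "projB cs y b = (\<lambda>(u1, u2) (v1, v2).
     (case cs of
        Case14 \<Rightarrow> bellv b u1 u2 * bellv b v1 v2
      | Case22 \<Rightarrow> ((if (u1, u2) = (v1, v2) then 1 else 0)
                   + (if b = 0 then 1 else -1) * Bobs y (u1, u2) (v1, v2)) / 2))"

text \<open>p(abc|xyz) = Tr[sigma (A^a_x (x) B^b_y (x) C^c_z)].\<close>
definition prob :: "bcase \<Rightarrow> op4 \<Rightarrow> bool \<Rightarrow> nat \<Rightarrow> bool \<Rightarrow> bool \<Rightarrow> nat \<Rightarrow> bool \<Rightarrow> real" where
  "prob cs \<sigma> x y z a b c =
     (\<Sum>i\<in>UNIV. \<Sum>j\<in>UNIV.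
        \<sigma> i j * (case (j, i) of ((a1, b1, b2, c1), (a2, b1', b2', c2)) \<Rightarrow>
          projAC x a a1 a2 * projB cs y b (b1, b2) (b1', b2') * projAC z c c1 c2))"

definition singlet :: "bool \<Rightarrow> bool \<Rightarrow> real" where
  "singlet = bellv 3"

definition rho :: op4 where
  "rho = (\<lambda>(a, b1, b2, c) (a', b1', b2', c').
     singlet a b1 * singlet a' b1' * singlet b2 c * singlet b2' c')"

definition rho_tilde_comp :: "nat \<Rightarrow> op4" where
  "rho_tilde_comp k = (\<lambda>(a, b1, b2, c) (a', b1', b2', c').
     bellv k a c * bellv k a' c' * bellv k b1 b2 * bellv k b1' b2')"

definition rho_tilde :: op4 where
  "rho_tilde i j = (\<Sum>k<4. (1/4) * rho_tilde_comp k i j)"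

definition is_density :: "op4 \<Rightarrow> bool" where
  "is_density \<sigma> \<longleftrightarrow> (\<forall>i j. \<sigma> i j = \<sigma> j i) \<and> (\<Sum>i\<in>UNIV. \<sigma> i i) = 1
     \<and> (\<forall>v :: idx4 \<Rightarrow> real. 0 \<le> (\<Sum>i\<in>UNIV. \<Sum>j\<in>UNIV. v i * \<sigma> i j * v j))"

text \<open>A strategy: finite label set L, probabilities q, states sigma e; Eve knows e.\<close>
definition valid_strategy :: "(nat \<Rightarrow> real) \<Rightarrow> (nat \<Rightarrow> op4) \<Rightarrow> nat set \<Rightarrow> bool" where
  "valid_strategy q \<sigma> L \<longleftrightarrow> finite L \<and> L \<noteq> {} \<and> (\<forall>e\<in>L. 0 \<le> q e) \<and> sum q L = 1
     \<and> (\<forall>e\<in>L. is_density (\<sigma> e))"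

definition reproduces :: "bcase \<Rightarrow> (nat \<Rightarrow> real) \<Rightarrow> (nat \<Rightarrow> op4) \<Rightarrow> nat set \<Rightarrow> bool" where
  "reproduces cs q \<sigma> L \<longleftrightarrow>
     (\<forall>x y z a b c. y \<in> Ysets cs \<longrightarrow> b \<in> Bouts cs \<longrightarrow>
        (\<Sum>e\<in>L. q e * prob cs (\<sigma> e) x y z a b c) = prob cs rho x y z a b c)"

definition guessABC :: "bcase \<Rightarrow> (nat \<Rightarrow> real) \<Rightarrow> (nat \<Rightarrow> op4) \<Rightarrow> nat set \<Rightarrow> real" where
  "guessABC cs q \<sigma> L = (\<Sum>e\<in>L. q e *
     Max {prob cs (\<sigma> e) False 0 False a b c | a b c. b \<in> Bouts cs})"

definition guessAC :: "bcase \<Rightarrow> (nat \<Rightarrow> real) \<Rightarrow> (nat \<Rightarrow> op4) \<Rightarrow> nat set \<Rightarrow> real" where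
  "guessAC cs q \<sigma> L = (\<Sum>e\<in>L. q e *
     Max {(\<Sum>b\<in>Bouts cs. prob cs (\<sigma> e) False 0 False a b c) | a c. True})"

definition PguessABC :: "bcase \<Rightarrow> real" where
  "PguessABC cs = Sup {guessABC cs q \<sigma> L | q \<sigma> L. valid_strategy q \<sigma> L \<and> reproduces cs q \<sigma> L}"

definition PguessAC :: "bcase \<Rightarrow> real" where
  "PguessAC cs = Sup {guessAC cs q \<sigma> L | q \<sigma> L. valid_strategy q \<sigma> L \<and> reproduces cs q \<sigma> L}"

definition HminABC :: "bcase \<Rightarrow> real" where "HminABC cs = - log 2 (PguessABC cs)"
definition HminAC :: "bcase \<Rightarrow> real" where "HminAC cs = - log 2 (PguessAC cs)"

end

theory Submission imports Defs begin
lemma sum_bool_prod: "(\<Sum>i\<in>(UNIV::(bool\<times>'a::finite) set). f i) = (\<Sum>i\<in>UNIV. f (False,i)) + (\<Sum>i\<in>UNIV. f (True,i))"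
proof -
  have "(\<Sum>i\<in>(UNIV::(bool\<times>'a::finite) set). f i) = (\<Sum>b\<in>UNIV. \<Sum>i\<in>UNIV. f (b,i))"
    by (subst UNIV_Times_UNIV[symmetric], subst sum.cartesian_product) simp
  then show ?thesis by (simp add: UNIV_bool)
qed
lemma sum_bool: "(\<Sum>i\<in>(UNIV::bool set). f i) = f False + f True" by (simp add: UNIV_bool)
lemmas defs = prob_def sum_bool_prod sum_bool rho_def rho_tilde_comp_def singlet_def bellv_def sgn_bit_def projAC_def obsAC_def projB_def sigma_z_def sigma_x_def id1_def Bobs_def eval_nat_numeral

definition psi :: "nat \<Rightarrow> idx4 \<Rightarrow> real" where
  "psi k = (\<lambda>(a,b1,b2,c). bellv k a c * bellv k b1 b2)"

lemma comp_psi: "rho_tilde_comp k i j = psi k i * psi k j"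
  by (cases i; cases j) (simp add: rho_tilde_comp_def psi_def mult_ac)

definition om :: "idx4 \<Rightarrow> real" where
  "om = (\<lambda>(a,b1,b2,c). singlet a b1 * singlet b2 c)"

lemma rho_om: "rho i j = om i * om j"
  by (cases i; cases j) (simp add: rho_def om_def mult_ac)

definition Mt :: "bcase \<Rightarrow> bool \<Rightarrow> nat \<Rightarrow> bool \<Rightarrow> bool \<Rightarrow> nat \<Rightarrow> bool \<Rightarrow> idx4 \<Rightarrow> idx4 \<Rightarrow> real" where
  "Mt cs x y z a b c j i = (case (j, i) of ((a1, b1, b2, c1), (a2, b1', b2', c2)) \<Rightarrow>
          projAC x a a1 a2 * projB cs y b (b1, b2) (b1', b2') * projAC z c c1 c2)"

lemma prob_supp:
  assumes s: "\<And>i j. \<sigma> i j = f i * f j" and z: "\<And>i. i \<notin> S \<Longrightarrow> f i = 0"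
  shows "prob cs \<sigma> x y z a b c = (\<Sum>i\<in>S. \<Sum>j\<in>S. f i * f j * Mt cs x y z a b c j i)"
proof -
  have "prob cs \<sigma> x y z a b c = (\<Sum>i\<in>UNIV. \<Sum>j\<in>UNIV. f i * f j * Mt cs x y z a b c j i)"
    by (simp add: prob_def Mt_def s)
  also have "\<dots> = (\<Sum>i\<in>UNIV. \<Sum>j\<in>S. f i * f j * Mt cs x y z a b c j i)"
    by (rule sum.cong[OF refl], rule sum.mono_neutral_right) (auto simp: z)
  also have "\<dots> = (\<Sum>i\<in>S. \<Sum>j\<in>S. f i * f j * Mt cs x y z a b c j i)"
    by (rule sum.mono_neutral_right) (auto simp: z)
  finally show ?thesis .
qed

definition Seq :: "idx4 set" where
  "Seq = {(False,False,False,False),(False,True,True,False),(True,False,False,True),(True,True,True,True)}"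
definition Sne :: "idx4 set" where
  "Sne = {(False,False,True,True),(False,True,False,True),(True,False,True,False),(True,True,False,False)}"
definition Sr :: "idx4 set" where
  "Sr = {(False,True,False,True),(False,True,True,False),(True,False,False,True),(True,False,True,False)}"

lemma supp_eq: "k \<le> 1 \<Longrightarrow> i \<notin> Seq \<Longrightarrow> psi k i = 0"
  by (cases i) (auto simp: psi_def Seq_def bellv_def)
lemma supp_ne: "2 \<le> k \<Longrightarrow> i \<notin> Sne \<Longrightarrow> psi k i = 0"
  by (cases i) (auto simp: psi_def Sne_def bellv_def)
lemma supp_r: "i \<notin> Sr \<Longrightarrow> om i = 0"
  by (cases i) (auto simp: om_def Sr_def singlet_def bellv_def)

lemma pr: "prob cs rho x y z a b c = (\<Sum>i\<in>Sr. \<Sum>j\<in>Sr. om i * om j * Mt cs x y z a b c j i)"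
  by (rule prob_supp[OF rho_om supp_r])
lemma pc0: "prob cs (rho_tilde_comp 0) x y z a b c = (\<Sum>i\<in>Seq. \<Sum>j\<in>Seq. psi 0 i * psi 0 j * Mt cs x y z a b c j i)"
  by (rule prob_supp[OF comp_psi supp_eq]) simp
lemma pc1: "prob cs (rho_tilde_comp (Suc 0)) x y z a b c = (\<Sum>i\<in>Seq. \<Sum>j\<in>Seq. psi (Suc 0) i * psi (Suc 0) j * Mt cs x y z a b c j i)"
  by (rule prob_supp[OF comp_psi supp_eq]) simp
lemma pc2: "prob cs (rho_tilde_comp 2) x y z a b c = (\<Sum>i\<in>Sne. \<Sum>j\<in>Sne. psi 2 i * psi 2 j * Mt cs x y z a b c j i)"
  by (rule prob_supp[OF comp_psi supp_ne]) simp
lemma pc3: "prob cs (rho_tilde_comp 3) x y z a b c = (\<Sum>i\<in>Sne. \<Sum>j\<in>Sne. psi 3 i * psi 3 j * Mt cs x y z a b c j i)"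
  by (rule prob_supp[OF comp_psi supp_ne]) simp

lemma sum4l: "(\<Sum>e<(4::nat). f e) = f 0 + f 1 + f 2 + f 3"
  by (simp add: eval_nat_numeral lessThan_Suc ac_simps)

lemmas ev = pr pc0 pc1 pc2 pc3 sum4l Seq_def Sne_def Sr_def psi_def om_def Mt_def singlet_def bellv_def sgn_bit_def
  projAC_def obsAC_def projB_def sigma_z_def sigma_x_def id1_def Bobs_def

lemma k4cases: "k < (4::nat) \<Longrightarrow> k = 0 \<or> k = 1 \<or> k = 2 \<or> k = 3" by arith

lemma r14: "b < 4 \<Longrightarrow> prob Case14 rho x y z a b c = (\<Sum>k<4. (1/4) * prob Case14 (rho_tilde_comp k) x y z a b c)"
  apply (drule k4cases)
  apply (elim disjE; cases x; cases z; cases a; cases c)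
  apply (simp_all add: ev)
  done
lemma r22: "y \<in> {0,1} \<Longrightarrow> b \<in> {0,1} \<Longrightarrow> prob Case22 rho x y z a b c = (\<Sum>k<4. (1/4) * prob Case22 (rho_tilde_comp k) x y z a b c)"
  apply (simp only: insert_iff empty_iff simp_thms)
  apply (elim disjE; cases x; cases z; cases a; cases c)
  apply (simp_all add: ev)
  apply (simp_all add: field_simps)
  done

definition c14 :: "nat \<Rightarrow> bool \<Rightarrow> nat \<Rightarrow> bool \<Rightarrow> real" where
  "c14 k a b c = (if b = k then (if k=0 then (if a=c then 1/2 else 0) else if k=3 then (if a\<noteq>c then 1/2 else 0) else 1/4) else 0)"
definition c22 :: "nat \<Rightarrow> bool \<Rightarrow> nat \<Rightarrow> bool \<Rightarrow> real" where
  "c22 k a b c = (if k=0 then (if b=0 \<and> a=c then 1/2 else 0) else if k=1 then (if b=0 then 1/4 else 0)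
     else if k=2 then (if b=1 then 1/4 else 0) else (if b=1 \<and> a\<noteq>c then 1/2 else 0))"

lemma p14: "k < 4 \<Longrightarrow> b < 4 \<Longrightarrow> prob Case14 (rho_tilde_comp k) False 0 False a b c = c14 k a b c"
  apply (drule k4cases)+
  apply (elim disjE; cases a; cases c)
  apply (simp_all add: ev c14_def)
  apply (simp_all add: field_simps)
  done
lemma p22: "k < 4 \<Longrightarrow> b < 2 \<Longrightarrow> prob Case22 (rho_tilde_comp k) False 0 False a b c = c22 k a b c"
  apply (drule k4cases)
  apply (subgoal_tac "b = 0 \<or> b = 1")
   prefer 2 apply arith
  apply (elim disjE; cases a; cases c)
  apply (simp_all add: ev c22_def)
  apply (simp_all add: field_simps)
  done

lemma trace_psi: "k < 4 \<Longrightarrow> (\<Sum>i\<in>UNIV. psi k i * psi k i) = 1"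
  apply (simp add: less_Suc_eq eval_nat_numeral)
  apply (elim disjE)
  apply (simp_all add: psi_def sum_bool_prod sum_bool bellv_def sgn_bit_def)
  done

lemma comp_density: "k < 4 \<Longrightarrow> is_density (rho_tilde_comp k)"
proof -
  assume k: "k < 4"
  have "0 \<le> (\<Sum>i\<in>UNIV. \<Sum>j\<in>UNIV. v i * rho_tilde_comp k i j * v j)" for v :: "idx4 \<Rightarrow> real"
  proof -
    have "(\<Sum>i\<in>UNIV. \<Sum>j\<in>UNIV. v i * rho_tilde_comp k i j * v j)
        = (\<Sum>i\<in>UNIV. v i * psi k i) * (\<Sum>j\<in>UNIV. v j * psi k j)"
      by (simp add: sum_product comp_psi mult_ac)
    then show ?thesis by simp
  qed
  then show ?thesis using trace_psi[OF k]
    by (simp add: is_density_def comp_psi mult.commute)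
qed

lemma sum_delta1: fixes f :: "'a::finite \<Rightarrow> real" shows "(\<Sum>n\<in>(UNIV::'a::finite set). (if n=i then t else 0) * f n) = t * f i"
proof -
  have "(\<Sum>n\<in>(UNIV::'a::finite set). (if n=i then t else 0) * f n) = (\<Sum>n\<in>UNIV. if n=i then t * f n else 0)"
    by (rule sum.cong) auto
  then show ?thesis by simp
qed

lemma sum_vec: fixes f :: "'a::finite \<Rightarrow> real" shows "(\<Sum>n\<in>(UNIV::'a::finite set). ((if n=i then 1 else 0) + (if n=j then s else 0)) * f n) = f i + s * f j"
proof -
  have "(\<Sum>n\<in>(UNIV::'a::finite set). ((if n=i then 1 else 0) + (if n=j then s else 0)) * f n)
     = (\<Sum>n\<in>UNIV. (if n=i then 1 else 0) * f n) + (\<Sum>n\<in>UNIV. (if n=j then s else 0) * f n)"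
    unfolding distrib_right by (rule sum.distrib)
  then show ?thesis by (simp add: sum_delta1)
qed

lemma dens_le: assumes d: "is_density \<sigma>" shows "\<bar>\<sigma> i j\<bar> \<le> 1"
proof -
  have sym: "\<And>i j. \<sigma> i j = \<sigma> j i" and tr: "(\<Sum>i\<in>UNIV. \<sigma> i i) = 1"
    and psd: "\<And>v. 0 \<le> (\<Sum>i\<in>UNIV. \<Sum>j\<in>UNIV. v i * \<sigma> i j * v j)"
    using d by (auto simp: is_density_def)
  have quad: "(\<Sum>m\<in>UNIV. \<Sum>n\<in>UNIV. ((if m=i then 1 else 0) + (if m=j then s else 0)) * \<sigma> m n
      * ((if n=i then 1 else 0) + (if n=j then s else 0))) = \<sigma> i i + s * \<sigma> i j + s * (\<sigma> j i + s * \<sigma> j j)"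
    for i j s
  proof -
    let ?w = "\<lambda>m. (if m=i then 1 else 0) + (if m=j then s else 0)"
    have inner: "(\<Sum>n\<in>UNIV. ?w m * \<sigma> m n * ?w n) = ?w m * (\<sigma> m i + s * \<sigma> m j)" for m
    proof -
      have "(\<Sum>n\<in>UNIV. ?w m * \<sigma> m n * ?w n) = ?w m * (\<Sum>n\<in>UNIV. ?w n * \<sigma> m n)"
        by (simp add: sum_distrib_left mult_ac)
      also have "(\<Sum>n\<in>UNIV. ?w n * \<sigma> m n) = \<sigma> m i + s * \<sigma> m j" by (rule sum_vec)
      finally show ?thesis .
    qed
    have "(\<Sum>m\<in>UNIV. \<Sum>n\<in>UNIV. ?w m * \<sigma> m n * ?w n) = (\<Sum>m\<in>UNIV. ?w m * (\<sigma> m i + s * \<sigma> m j))"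
      by (simp only: inner)
    also have "\<dots> = \<sigma> i i + s * \<sigma> i j + s * (\<sigma> j i + s * \<sigma> j j)"
      by (rule sum_vec)
    finally show ?thesis .
  qed
  have diag: "0 \<le> \<sigma> l l" for l
    using psd[of "\<lambda>m. (if m=l then 1 else 0) + (if m=l then 0 else 0)"] quad[of l l 0] by simp
  have diagle: "\<sigma> l l \<le> 1" for l
  proof -
    have "\<sigma> l l \<le> (\<Sum>i\<in>UNIV. \<sigma> i i)" by (rule member_le_sum) (auto simp: diag)
    then show ?thesis using tr by simp
  qed
  show ?thesis
  proof (cases "i = j")
    case True then show ?thesis using diag[of i] diagle[of i] by simp
  next
    case False
    have two: "\<sigma> i i + \<sigma> j j \<le> 1"
    proof -
      have "(\<Sum>l\<in>{i,j}. \<sigma> l l) \<le> (\<Sum>l\<in>UNIV. \<sigma> l l)" by (rule sum_mono2) (auto simp: diag)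
      then show ?thesis using tr False by simp
    qed
    have p: "0 \<le> \<sigma> i i + 1 * \<sigma> i j + 1 * (\<sigma> j i + 1 * \<sigma> j j)"
    proof -
      have "0 \<le> (\<Sum>m\<in>UNIV. \<Sum>n\<in>UNIV. ((if m=i then 1 else 0) + (if m=j then 1 else 0)) * \<sigma> m n
      * ((if n=i then 1 else 0) + (if n=j then 1 else 0)))" by (rule psd)
      then show ?thesis by (simp only: quad)
    qed
    have m: "0 \<le> \<sigma> i i + (-1) * \<sigma> i j + (-1) * (\<sigma> j i + (-1) * \<sigma> j j)"
    proof -
      have "0 \<le> (\<Sum>m\<in>UNIV. \<Sum>n\<in>UNIV. ((if m=i then 1 else 0) + (if m=j then -1 else 0)) * \<sigma> m n
      * ((if n=i then 1 else 0) + (if n=j then -1 else 0)))" by (rule psd)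
      then show ?thesis by (simp only: quad)
    qed
    show ?thesis using p m two sym[of j i] diag[of i] diag[of j] by (simp add: abs_le_iff)
  qed
qed

lemma s2ge1: "1 \<le> sqrt (2::real)" by simp
lemma s2ge2: "1 \<le> 2 * sqrt (2::real)" using s2ge1 by linarith
lemmas s2ge = s2ge1 s2ge2

lemma projAC_le: "\<bar>projAC x a i j\<bar> \<le> 1"
  using s2ge by (cases x; cases a; cases i; cases j) (auto simp: projAC_def obsAC_def sigma_z_def sigma_x_def id1_def sgn_bit_def field_simps)

lemma bellv_le: "\<bar>bellv k u v\<bar> \<le> 1"
  using s2ge by (auto simp: bellv_def sgn_bit_def field_simps)

lemma projB_le: "\<bar>projB cs 0 b u v\<bar> \<le> 1"
proof -
  obtain u1 u2 v1 v2 where uv: "u = (u1,u2)" "v = (v1,v2)" by fastforce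
  show ?thesis
  proof (cases cs)
    case Case14
    then show ?thesis using bellv_le[of b u1 u2] bellv_le[of b v1 v2]
      by (simp add: uv projB_def abs_mult mult_le_one)
  next
    case Case22
    then show ?thesis
      by (cases u1; cases u2; cases v1; cases v2) (auto simp: uv projB_def Bobs_def sigma_z_def sgn_bit_def sigma_x_def)
  qed
qed

lemma term_le: "\<bar>(case (j, i) of ((a1, b1, b2, c1), (a2, b1', b2', c2)) \<Rightarrow>
          projAC x a a1 a2 * projB cs 0 b (b1, b2) (b1', b2') * projAC z c c1 c2)\<bar> \<le> 1"
proof -
  obtain a1 b1 b2 c1 where j: "j = (a1,b1,b2,c1)" by (cases j) auto
  obtain a2 b1' b2' c2 where i: "i = (a2,b1',b2',c2)" by (cases i) auto
  show ?thesis
    using projAC_le[of x a a1 a2] projB_le[of cs b "(b1,b2)" "(b1',b2')"] projAC_le[of z c c1 c2]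
    by (simp add: i j abs_mult mult_le_one)
qed

lemma prob_le: assumes d: "is_density \<sigma>" shows "prob cs \<sigma> x 0 z a b c \<le> 256"
proof -
  have "prob cs \<sigma> x 0 z a b c \<le> (\<Sum>i\<in>(UNIV::idx4 set). \<Sum>j\<in>(UNIV::idx4 set). 1)"
    unfolding prob_def
  proof (rule sum_mono, rule sum_mono)
    fix i j
    show "\<sigma> i j * (case (j, i) of ((a1, b1, b2, c1), (a2, b1', b2', c2)) \<Rightarrow>
          projAC x a a1 a2 * projB cs 0 b (b1, b2) (b1', b2') * projAC z c c1 c2) \<le> 1"
    proof -
      let ?t = "(case (j, i) of ((a1, b1, b2, c1), (a2, b1', b2', c2)) \<Rightarrow>
          projAC x a a1 a2 * projB cs 0 b (b1, b2) (b1', b2') * projAC z c c1 c2)"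
      have "\<sigma> i j * ?t \<le> \<bar>\<sigma> i j * ?t\<bar>" by (rule abs_ge_self)
      also have "\<dots> = \<bar>\<sigma> i j\<bar> * \<bar>?t\<bar>" by (rule abs_mult)
      also have "\<dots> \<le> 1" by (rule mult_le_one[OF dens_le[OF d] abs_ge_zero term_le])
      finally show ?thesis .
    qed
  qed
  also have "\<dots> = 256" by (simp add: card_UNIV_bool UNIV_Times_UNIV[symmetric] card_cartesian_product del: UNIV_Times_UNIV)
  finally show ?thesis .
qed


lemma fin3: fixes f :: "bool \<Rightarrow> nat \<Rightarrow> bool \<Rightarrow> real" shows "finite B \<Longrightarrow> finite {f a b c | a b c. b \<in> (B::nat set)}"
proof -
  assume "finite B"
  moreover have "{f a b c | a b c. b \<in> B} = (\<lambda>(a,b,c). f a b c) ` ((UNIV::bool set) \<times> B \<times> (UNIV::bool set))"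
    by (auto simp: image_iff) (metis case_prod_conv)
  ultimately show ?thesis by simp
qed
lemma fin2: "finite {g a c | a c. True}" for g :: "bool \<Rightarrow> bool \<Rightarrow> real"
proof -
  have "{g a c | a c. True} = (\<lambda>(a,c). g a c) ` ((UNIV::bool set) \<times> (UNIV::bool set))"
    by (auto simp: image_iff)
  then show ?thesis by simp
qed

lemma memI3: "m = f a b c \<Longrightarrow> b \<in> B \<Longrightarrow> m \<in> {f a b c | a b c. b \<in> B}" by blast
lemma memI2: "m = g a c \<Longrightarrow> m \<in> {g a c | a c. True}" by blast

lemma maxABC14: assumes k: "k < 4"
  shows "Max {prob Case14 (rho_tilde_comp k) False 0 False a b c | a b c. b \<in> Bouts Case14}
     = (if k = 0 \<or> k = 3 then 1/2 else 1/4)" (is "Max ?A = ?m")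
proof (rule Max_eqI)
  show "finite ?A" by (rule fin3) (simp add: Bouts_def)
next
  fix y assume "y \<in> ?A"
  then obtain a b c where b: "b \<in> Bouts Case14" and y: "y = prob Case14 (rho_tilde_comp k) False 0 False a b c" by blast
  have "y = c14 k a b c" using y b k by (simp add: p14 Bouts_def)
  moreover have "k = 0 \<or> k = 1 \<or> k = 2 \<or> k = 3" using k by arith
  ultimately show "y \<le> ?m" by (elim disjE) (auto simp: c14_def)
next
  have e: "prob Case14 (rho_tilde_comp k) False 0 False False k (k=3) = ?m"
    using k by (simp add: p14 c14_def)
  have kb: "k \<in> Bouts Case14" using k by (simp add: Bouts_def)
  show "?m \<in> ?A"
    by (rule memI3[where f="\<lambda>a b c. prob Case14 (rho_tilde_comp k) False 0 False a b c", OF e[symmetric] kb])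
qed

lemma maxABC22: assumes k: "k < 4"
  shows "Max {prob Case22 (rho_tilde_comp k) False 0 False a b c | a b c. b \<in> Bouts Case22}
     = (if k = 0 \<or> k = 3 then 1/2 else 1/4)" (is "Max ?A = ?m")
proof (rule Max_eqI)
  show "finite ?A" by (rule fin3) (simp add: Bouts_def)
next
  fix y assume "y \<in> ?A"
  then obtain a b c where b: "b \<in> Bouts Case22" and y: "y = prob Case22 (rho_tilde_comp k) False 0 False a b c" by blast
  have "y = c22 k a b c" using y b k by (auto simp: p22 Bouts_def)
  moreover have "k = 0 \<or> k = 1 \<or> k = 2 \<or> k = 3" using k by arith
  ultimately show "y \<le> ?m" by (elim disjE) (auto simp: c22_def)
next
  have e: "prob Case22 (rho_tilde_comp k) False 0 False False (if k \<le> 1 then 0 else 1) (k=3) = ?m"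
    using k by (simp add: p22 c22_def)
  have kb: "(if k \<le> 1 then 0 else 1) \<in> Bouts Case22" by (simp add: Bouts_def)
  show "?m \<in> ?A"
    by (rule memI3[where f="\<lambda>a b c. prob Case22 (rho_tilde_comp k) False 0 False a b c", OF e[symmetric] kb])
qed

lemma sum4: "(\<Sum>e\<in>{0..<4::nat}. f e) = f 0 + f 1 + f 2 + f 3"
  by (simp add: atLeast0LessThan eval_nat_numeral lessThan_Suc ac_simps)

lemma sumAC14: "k < 4 \<Longrightarrow> (\<Sum>b\<in>Bouts Case14. prob Case14 (rho_tilde_comp k) False 0 False a b c) = c14 k a k c"
proof -
  assume k: "k < 4"
  have "(\<Sum>b\<in>Bouts Case14. prob Case14 (rho_tilde_comp k) False 0 False a b c) = (\<Sum>b\<in>{0..<4}. c14 k a b c)"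
    by (rule sum.cong) (auto simp: Bouts_def p14 k)
  also have "\<dots> = c14 k a k c"
  proof -
    have "k = 0 \<or> k = 1 \<or> k = 2 \<or> k = 3" using k by arith
    then show ?thesis by (elim disjE) (simp_all add: sum4 c14_def)
  qed
  finally show ?thesis .
qed

lemma sumAC22: "k < 4 \<Longrightarrow> (\<Sum>b\<in>Bouts Case22. prob Case22 (rho_tilde_comp k) False 0 False a b c) = c22 k a 0 c + c22 k a 1 c"
proof -
  assume k: "k < 4"
  have "(\<Sum>b\<in>Bouts Case22. prob Case22 (rho_tilde_comp k) False 0 False a b c) = (\<Sum>b\<in>{0,1}. c22 k a b c)"
    by (rule sum.cong) (auto simp: Bouts_def p22 k)
  also have "\<dots> = c22 k a 0 c + c22 k a 1 c" by simp
  finally show ?thesis .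
qed

lemma maxAC14: assumes k: "k < 4"
  shows "Max {(\<Sum>b\<in>Bouts Case14. prob Case14 (rho_tilde_comp k) False 0 False a b c) | a c. True}
     = (if k = 0 \<or> k = 3 then 1/2 else 1/4)" (is "Max ?A = ?m")
proof -
  have "?A = {c14 k a k c | a c. True}" using k by (simp add: sumAC14)
  also have "Max \<dots> = ?m"
  proof (rule Max_eqI)
    show "finite {c14 k a k c | a c. True}" by (rule fin2)
  next
    fix y assume "y \<in> {c14 k a k c | a c. True}"
    moreover have "k = 0 \<or> k = 1 \<or> k = 2 \<or> k = 3" using k by arith
  ultimately show "y \<le> ?m" by (elim disjE) (auto simp: c14_def)
  next
    have "c14 k False k (k=3) = ?m" using k by (simp add: c14_def)
    then show "?m \<in> {c14 k a k c | a c. True}" by (rule memI2[where g="\<lambda>a c. c14 k a k c", OF sym])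
  qed
  finally show ?thesis .
qed

lemma maxAC22: assumes k: "k < 4"
  shows "Max {(\<Sum>b\<in>Bouts Case22. prob Case22 (rho_tilde_comp k) False 0 False a b c) | a c. True}
     = (if k = 0 \<or> k = 3 then 1/2 else 1/4)" (is "Max ?A = ?m")
proof -
  have "?A = {c22 k a 0 c + c22 k a 1 c | a c. True}" using k by (simp add: sumAC22)
  also have "Max \<dots> = ?m"
  proof (rule Max_eqI)
    show "finite {c22 k a 0 c + c22 k a 1 c | a c. True}" by (rule fin2)
  next
    fix y assume "y \<in> {c22 k a 0 c + c22 k a 1 c | a c. True}"
    moreover have "k = 0 \<or> k = 1 \<or> k = 2 \<or> k = 3" using k by arith
  ultimately show "y \<le> ?m" by (elim disjE) (auto simp: c22_def)
  next
    have "k = 0 \<or> k = 1 \<or> k = 2 \<or> k = 3" using k by arith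
    then have "c22 k False 0 (k=3) + c22 k False 1 (k=3) = ?m" by (elim disjE) (simp_all add: c22_def)
    then show "?m \<in> {c22 k a 0 c + c22 k a 1 c | a c. True}" by (rule memI2[where g="\<lambda>a c. c22 k a 0 c + c22 k a 1 c", OF sym])
  qed
  finally show ?thesis .
qed

lemma k4: "(0::nat) < 4" "(1::nat) < 4" "(2::nat) < 4" "(3::nat) < 4" by simp_all

lemma guessABC_val: "guessABC cs (\<lambda>_. 1/4) rho_tilde_comp {0..<4} = 3/8"
proof (cases cs)
  case Case14 then show ?thesis
    by (simp only: guessABC_def sum4 maxABC14[OF k4(1)] maxABC14[OF k4(2)] maxABC14[OF k4(3)] maxABC14[OF k4(4)]) simp
next
  case Case22 then show ?thesis
    by (simp only: guessABC_def sum4 maxABC22[OF k4(1)] maxABC22[OF k4(2)] maxABC22[OF k4(3)] maxABC22[OF k4(4)]) simp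
qed
lemma guessAC_val: "guessAC cs (\<lambda>_. 1/4) rho_tilde_comp {0..<4} = 3/8"
proof (cases cs)
  case Case14 then show ?thesis
    by (simp only: guessAC_def sum4 maxAC14[OF k4(1)] maxAC14[OF k4(2)] maxAC14[OF k4(3)] maxAC14[OF k4(4)]) simp
next
  case Case22 then show ?thesis
    by (simp only: guessAC_def sum4 maxAC22[OF k4(1)] maxAC22[OF k4(2)] maxAC22[OF k4(3)] maxAC22[OF k4(4)]) simp
qed

lemma valid: "valid_strategy (\<lambda>_. 1/4) rho_tilde_comp {0..<4}"
  unfolding valid_strategy_def by (auto simp: comp_density)

lemma repro: "reproduces cs (\<lambda>_. 1/4) rho_tilde_comp {0..<4}"
  unfolding reproduces_def
proof (intro allI impI)
  fix x y z a b c
  assume y: "y \<in> Ysets cs" and b: "b \<in> Bouts cs"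
  show "(\<Sum>e\<in>{0..<4}. 1/4 * prob cs (rho_tilde_comp e) x y z a b c) = prob cs rho x y z a b c"
  proof (cases cs)
    case Case14
    then have "b < 4" using b by (simp add: Bouts_def)
    then show ?thesis using Case14 by (simp add: r14 atLeast0LessThan)
  next
    case Case22
    then have "y \<in> {0,1}" "b \<in> {0,1}" using y b by (simp_all add: Bouts_def Ysets_def)
    then show ?thesis using Case22 by (simp only: r22 atLeast0LessThan)
  qed
qed

lemma Bouts_fin: "finite (Bouts cs)" "0 \<in> Bouts cs"
  by (cases cs; simp add: Bouts_def)+

lemma guessABC_le: assumes v: "valid_strategy q \<sigma> L" shows "guessABC cs q \<sigma> L \<le> 256"
proof -
  have fin: "finite L" and q: "\<And>e. e \<in> L \<Longrightarrow> 0 \<le> q e" and sq: "sum q L = 1"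
    and d: "\<And>e. e \<in> L \<Longrightarrow> is_density (\<sigma> e)"
    using v by (auto simp: valid_strategy_def)
  have mx: "Max {prob cs (\<sigma> e) False 0 False a b c | a b c. b \<in> Bouts cs} \<le> 256" if e: "e \<in> L" for e
  proof (rule Max.boundedI)
    show "finite {prob cs (\<sigma> e) False 0 False a b c | a b c. b \<in> Bouts cs}"
      by (rule fin3) (rule Bouts_fin)
    show "{prob cs (\<sigma> e) False 0 False a b c | a b c. b \<in> Bouts cs} \<noteq> {}"
      using Bouts_fin(2) by blast
    show "\<And>y. y \<in> {prob cs (\<sigma> e) False 0 False a b c | a b c. b \<in> Bouts cs} \<Longrightarrow> y \<le> 256"
      using prob_le[OF d[OF e]] by blast
  qed
  have "guessABC cs q \<sigma> L \<le> (\<Sum>e\<in>L. q e * 256)"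
    unfolding guessABC_def by (rule sum_mono) (rule mult_left_mono[OF mx q])
  also have "\<dots> = 256" using sq by (simp add: sum_distrib_right[symmetric])
  finally show ?thesis .
qed

lemma guessAC_le: assumes v: "valid_strategy q \<sigma> L" shows "guessAC cs q \<sigma> L \<le> 256 * real (card (Bouts cs))"
proof -
  have fin: "finite L" and q: "\<And>e. e \<in> L \<Longrightarrow> 0 \<le> q e" and sq: "sum q L = 1"
    and d: "\<And>e. e \<in> L \<Longrightarrow> is_density (\<sigma> e)"
    using v by (auto simp: valid_strategy_def)
  have mx: "Max {(\<Sum>b\<in>Bouts cs. prob cs (\<sigma> e) False 0 False a b c) | a c. True} \<le> 256 * real (card (Bouts cs))"
    if e: "e \<in> L" for e
  proof (rule Max.boundedI)
    show "finite {(\<Sum>b\<in>Bouts cs. prob cs (\<sigma> e) False 0 False a b c) | a c. True}"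
      by (rule fin2)
    show "{(\<Sum>b\<in>Bouts cs. prob cs (\<sigma> e) False 0 False a b c) | a c. True} \<noteq> {}"
      by blast
    fix y assume "y \<in> {(\<Sum>b\<in>Bouts cs. prob cs (\<sigma> e) False 0 False a b c) | a c. True}"
    then obtain a c where y: "y = (\<Sum>b\<in>Bouts cs. prob cs (\<sigma> e) False 0 False a b c)" by blast
    have "y \<le> (\<Sum>b\<in>Bouts cs. 256)" unfolding y by (rule sum_mono) (rule prob_le[OF d[OF e]])
    then show "y \<le> 256 * real (card (Bouts cs))" by simp
  qed
  have "guessAC cs q \<sigma> L \<le> (\<Sum>e\<in>L. q e * (256 * real (card (Bouts cs))))"
    unfolding guessAC_def by (rule sum_mono) (rule mult_left_mono[OF mx q])
  also have "\<dots> = 256 * real (card (Bouts cs))" using sq by (simp add: sum_distrib_right[symmetric])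
  finally show ?thesis .
qed

lemma log_bound: assumes "3/8 \<le> (P::real)" shows "- log 2 P \<le> log 2 (8/3)"
proof -
  have P: "0 < P" using assms by simp
  have "log 2 (8/3) + log 2 P = log 2 (8/3 * P)" using P by (subst log_mult) simp
  moreover have "0 \<le> log 2 (8/3 * P)" using P assms by (subst zero_le_log_cancel_iff) auto
  ultimately show ?thesis by linarith
qed

lemma memS: "u = f q s L \<Longrightarrow> P q s L \<Longrightarrow> u \<in> {f q s L | q s L. P q s L}" by blast

lemma PguessABC_ge: "3/8 \<le> PguessABC cs"
  unfolding PguessABC_def
proof (rule cSup_upper)
  show "3/8 \<in> {guessABC cs q \<sigma> L | q \<sigma> L. valid_strategy q \<sigma> L \<and> reproduces cs q \<sigma> L}"
    by (rule memS[where f="guessABC cs" and P="\<lambda>q \<sigma> L. valid_strategy q \<sigma> L \<and> reproduces cs q \<sigma> L",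
        OF guessABC_val[symmetric]]) (intro conjI valid repro)
  show "bdd_above {guessABC cs q \<sigma> L | q \<sigma> L. valid_strategy q \<sigma> L \<and> reproduces cs q \<sigma> L}"
  proof (rule bdd_aboveI[where M=256])
    fix u assume "u \<in> {guessABC cs q \<sigma> L | q \<sigma> L. valid_strategy q \<sigma> L \<and> reproduces cs q \<sigma> L}"
    then obtain q \<sigma> L where "u = guessABC cs q \<sigma> L" "valid_strategy q \<sigma> L" by blast
    then show "u \<le> 256" using guessABC_le by simp
  qed
qed

lemma PguessAC_ge: "3/8 \<le> PguessAC cs"
  unfolding PguessAC_def
proof (rule cSup_upper)
  show "3/8 \<in> {guessAC cs q \<sigma> L | q \<sigma> L. valid_strategy q \<sigma> L \<and> reproduces cs q \<sigma> L}"
    by (rule memS[where f="guessAC cs" and P="\<lambda>q \<sigma> L. valid_strategy q \<sigma> L \<and> reproduces cs q \<sigma> L",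
        OF guessAC_val[symmetric]]) (intro conjI valid repro)
  show "bdd_above {guessAC cs q \<sigma> L | q \<sigma> L. valid_strategy q \<sigma> L \<and> reproduces cs q \<sigma> L}"
  proof (rule bdd_aboveI[where M="256 * real (card (Bouts cs))"])
    fix u assume "u \<in> {guessAC cs q \<sigma> L | q \<sigma> L. valid_strategy q \<sigma> L \<and> reproduces cs q \<sigma> L}"
    then obtain q \<sigma> L where "u = guessAC cs q \<sigma> L" "valid_strategy q \<sigma> L" by blast
    then show "u \<le> 256 * real (card (Bouts cs))" using guessAC_le by simp
  qed
qed

theorem mainTheorem4:
  fixes cs :: bcase
  shows "rho_tilde = (\<lambda>i j. \<Sum>k\<in>{0..<4}. (1/4) * rho_tilde_comp k i j)
    \<and> valid_strategy (\<lambda>_. 1/4) rho_tilde_comp {0..<4}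
    \<and> reproduces cs (\<lambda>_. 1/4) rho_tilde_comp {0..<4}
    \<and> guessABC cs (\<lambda>_. 1/4) rho_tilde_comp {0..<4} = 3/8
    \<and> guessAC cs (\<lambda>_. 1/4) rho_tilde_comp {0..<4} = 3/8
    \<and> HminABC cs \<le> log 2 (8/3)
    \<and> HminAC cs \<le> log 2 (8/3)"
proof (intro conjI)
  show "rho_tilde = (\<lambda>i j. \<Sum>k\<in>{0..<4}. (1/4) * rho_tilde_comp k i j)"
    by (intro ext) (simp add: rho_tilde_def atLeast0LessThan)
  show "HminABC cs \<le> log 2 (8/3)" unfolding HminABC_def by (rule log_bound[OF PguessABC_ge])
  show "HminAC cs \<le> log 2 (8/3)" unfolding HminAC_def by (rule log_bound[OF PguessAC_ge])
  show "valid_strategy (\<lambda>_. 1/4) rho_tilde_comp {0..<4}" by (rule valid)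
  show "reproduces cs (\<lambda>_. 1/4) rho_tilde_comp {0..<4}" by (rule repro)
  show "guessABC cs (\<lambda>_. 1/4) rho_tilde_comp {0..<4} = 3/8" by (rule guessABC_val)
  show "guessAC cs (\<lambda>_. 1/4) rho_tilde_comp {0..<4} = 3/8" by (rule guessAC_val)
qed

end
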